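(* Fix $n$, generators $x_{i_1},\dots,x_{i_k}\in\mathcal{B}_n$, an index $j$, integers $a_h$ ($h\ne j$), and set $V(e)=V_n(x_{i_1}^{a_1}\cdots x_{i_j}^{e}\cdots x_{i_k}^{a_k})$ for $e\in\mathbb{Z}$. Then for every $e\in\mathbb{Z}$: (a) $\mathrm{ord}\,V(e+2)\ge1+\min(\mathrm{ord}\,V(e),\mathrm{ord}\,V(e+1))$; (b) for every $m\ge2$, $\mathrm{ord}\,V(e+m)\ge\min(\mathrm{ord}\,V(e),\mathrm{ord}\,V(e+1))+(m-1)$. In particular, for all sufficiently large $e$, $V(e)$ is a polynomial in $s$.
   Context: $\mathcal{B}_n$ is the Artin braid group with generators $x_1,\dots,x_{n-1}$; $V_n(\beta)$ is the Jones polynomial of the closure of $\beta$, normalized by $V(\text{unknot})=1$, $q^{-1}V_{L_+}-qV_{L_-}=(q^{1/2}-q^{-1/2})V_{L_0}$, as a Laurent polynomial in $s=q^{-1/2}$. Conventions: closures of $\alpha x_i^{e+2}\gamma$, $\alpha x_i^{e+1}\gamma$, $\alpha x_i^{e}\gamma$ play the roles of $L_-,L_0,L_+$ (e.g. the closure of $x_1^2\in\mathcal B_2$ has Jones polynomial $-s-s^5$). For a nonzero Laurent polynomial $f=a_qs^q+\dots+a_ps^p$ with $a_q,a_p\neq0$, $\mathrm{ord} f=q$. *)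

theory Defs
  imports "HOL-Computational_Algebra.Formal_Laurent_Series"
begin

(* A braid word in B_n: a list of letters (i, eps), standing for x_i^eps with
   1 <= i <= n-1 and eps in {1,-1}. *)
type_synonym braid_word = "(nat \<times> int) list"

definition power_word :: "nat \<Rightarrow> (nat \<Rightarrow> nat) \<Rightarrow> (nat \<Rightarrow> int) \<Rightarrow> braid_word" where
  "power_word k i a = concat (map (\<lambda>h. replicate (nat \<bar>a h\<bar>) (i h, sgn (a h))) [0..<k])"

(* Kauffman state model for the closure of a braid word w in B_n.
   Each crossing (position p) is smoothed either vertically (identity) or
   horizontally (cup-cap e_i, when p \<in> S).  The points of the closed diagram are
   (level, strand) with levels taken mod the word length (the closure). *)
definition closure_points :: "nat \<Rightarrow> braid_word \<Rightarrow> (nat \<times> nat) set" where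
  "closure_points n w = {..<max 1 (length w)} \<times> {..<n}"

definition smoothing_edges :: "nat \<Rightarrow> braid_word \<Rightarrow> nat set \<Rightarrow> ((nat \<times> nat) \<times> (nat \<times> nat)) set" where
  "smoothing_edges n w S =
     (\<Union>p<length w.
        (let i = fst (w ! p); q = Suc p mod length w in
         if p \<in> S then
           {((p, k), (q, k)) | k. k < n \<and> k \<noteq> i - 1 \<and> k \<noteq> i}
           \<union> {((p, i - 1), (p, i)), ((q, i - 1), (q, i))}
         else {((p, k), (q, k)) | k. k < n}))"

definition state_loops :: "nat \<Rightarrow> braid_word \<Rightarrow> nat set \<Rightarrow> nat" where
  "state_loops n w S =
     card (closure_points n w // ((smoothing_edges n w S \<union> (smoothing_edges n w S)\<inverse>)\<^sup>*))"

(* Jones polynomial of the closure of w in B_n, as a Laurent polynomial in s = q^(-1/2).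
   This is the Kauffman bracket formula V = (-A^3)^(-writhe) <D>, loop value
   d = -A^2 - A^(-2), normalised by <unknot> = 1, rewritten in s = A^2.
   Convention (matching the paper): x_i is a negative crossing (writhe -1);
   for a letter x_i^eps the identity smoothing has weight A^(-eps), the cup-cap
   smoothing weight A^eps.  Combining with the writhe factor, each letter
   contributes s^eps (identity) or s^(2 eps) (cup-cap), times an overall sign
   (-1)^(length w).  (Check: closure of x_1 in B_2 gives 1, of x_1^2 gives -s-s^5.) *)
definition jones :: "nat \<Rightarrow> braid_word \<Rightarrow> int fls" where
  "jones n w =
     (-1) ^ length w *
     (\<Sum>S\<in>Pow {..<length w}.
        (\<Prod>p<length w. fls_X_intpow (if p \<in> S then 2 * snd (w ! p) else snd (w ! p)))
        * (- (fls_X + fls_X_inv)) ^ (state_loops n w S - 1))"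

abbreviation ord_fls :: "int fls \<Rightarrow> int" where
  "ord_fls f \<equiv> fls_subdegree f"

end

theory Submission
  imports Defs "HOL-Computational_Algebra.Polynomial_FPS"
begin



definition eat :: "nat \<Rightarrow> nat \<Rightarrow> nat \<Rightarrow> nat \<Rightarrow> bool \<Rightarrow> ((nat \<times> nat) \<times> (nat \<times> nat)) set" where
  "eat n i p q b = (if b then {((p, k), (q, k)) | k. k < n \<and> k \<noteq> i - 1 \<and> k \<noteq> i}
           \<union> {((p, i - 1), (p, i)), ((q, i - 1), (q, i))}
         else {((p, k), (q, k)) | k. k < n})"

lemma smoothing_edges_eat:
  "smoothing_edges n w S = (\<Union>p<length w. eat n (fst (w!p)) p (Suc p mod length w) (p \<in> S))"
  by (simp add: smoothing_edges_def eat_def Let_def)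

abbreviation SR :: "'a rel \<Rightarrow> 'a rel" where "SR E \<equiv> (E \<union> E\<inverse>)\<^sup>*"

definition mlv :: "(nat \<Rightarrow> nat) \<Rightarrow> nat \<times> nat \<Rightarrow> nat \<times> nat" where "mlv h x = (h (fst x), snd x)"

lemma eat_map: "(u,v) \<in> eat n i p q b \<Longrightarrow> (mlv h u, mlv h v) \<in> eat n i (h p) (h q) b"
  by (auto simp: eat_def mlv_def split: if_splits)

lemma eat_sub: "p < length w \<Longrightarrow> eat n (fst (w!p)) p (Suc p mod length w) (p \<in> S) \<subseteq> smoothing_edges n w S"
  by (auto simp: smoothing_edges_eat)

lemma eat_diag_False: "eat n i p p False \<subseteq> Id" by (auto simp: eat_def)
lemma eat_diag_True: "eat n i p p True \<subseteq> Id \<union> {((p,i-1),(p,i))}" by (auto simp: eat_def)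

lemma SR_edge: "(u,v) \<in> E \<Longrightarrow> (u,v) \<in> SR E" by (rule r_into_rtrancl) (rule UnI1)
lemma sym_SR: "sym (SR E)"
  by (rule sym_rtrancl) (rule sym_Un_converse)
lemma SR_sym: "(u,v) \<in> SR E \<Longrightarrow> (v,u) \<in> SR E"
  using sym_SR by (rule symD)
lemma SR_trans: "(u,v) \<in> SR E \<Longrightarrow> (v,x) \<in> SR E \<Longrightarrow> (u,x) \<in> SR E" by (rule rtrancl_trans)
lemma SR_edge': "(v,u) \<in> E \<Longrightarrow> (u,v) \<in> SR E" by (rule r_into_rtrancl) (rule UnI2, simp)

lemma map_SR:
  assumes fw: "\<And>u v. (u,v) \<in> E \<Longrightarrow> (f u, f v) \<in> SR E'"
    and xy: "(x,y) \<in> SR E"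
  shows "(f x, f y) \<in> SR E'"
  using xy
proof (induct rule: rtrancl_induct)
  case base then show ?case by (rule rtrancl_refl)
next
  case (step y z)
  from step(2) have "(f y, f z) \<in> SR E'"
  proof
    assume "(y,z) \<in> E" then show ?thesis by (rule fw)
  next
    assume "(y,z) \<in> E\<inverse>" then have "(z,y) \<in> E" by (rule converseD)
    then show ?thesis by (rule SR_sym[OF fw])
  qed
  with step(3) show ?case by (rule rtrancl_trans)
qed

lemma collapse_rel:
  assumes fw: "\<And>u v. (u,v) \<in> E \<Longrightarrow> (f u, f v) \<in> SR E'"
    and bw: "\<And>u v. (u,v) \<in> E' \<Longrightarrow> (g u, g v) \<in> SR E"
    and gx: "(x, g (f x)) \<in> SR E" and gy: "(y, g (f y)) \<in> SR E"
  shows "(x,y) \<in> SR E \<longleftrightarrow> (f x, f y) \<in> SR E'"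
proof
  assume "(x,y) \<in> SR E" with fw show "(f x, f y) \<in> SR E'" by (rule map_SR)
next
  assume "(f x, f y) \<in> SR E'"
  with bw have "(g (f x), g (f y)) \<in> SR E" by (rule map_SR)
  with gx gy show "(x,y) \<in> SR E" by (meson SR_sym SR_trans)
qed

lemma equiv_SR: "equiv UNIV (SR E)"
proof (rule equivI)
  show "refl (SR E)" by (simp add: refl_rtrancl)
  show "sym (SR E)" by (meson SR_sym symI)
  show "trans (SR E)" by (simp add: trans_rtrancl)
qed auto

lemma SR_class_eq: "SR E `` {x} = SR E `` {y} \<longleftrightarrow> (x,y) \<in> SR E"
  using equiv_class_eq_iff[OF equiv_SR, of x y E] by simp

lemma quot_image: "A // R = (\<lambda>x. R``{x}) ` A"
  by (auto simp: quotient_def)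

lemma card_image_kernel:
  assumes "\<And>x y. x \<in> A \<Longrightarrow> y \<in> A \<Longrightarrow> h x = h y \<longleftrightarrow> h' x = h' y"
  shows "card (h ` A) = card (h' ` A)"
proof -
  let ?phi = "\<lambda>c. h' (inv_into A h c)"
  have img: "?phi ` (h ` A) = h' ` A"
  proof -
    have "\<And>x. x \<in> A \<Longrightarrow> ?phi (h x) = h' x"
      using assms by (metis f_inv_into_f image_eqI inv_into_into)
    thus ?thesis by (auto simp: image_image)
  qed
  have inj: "inj_on ?phi (h ` A)"
  proof (rule inj_onI)
    fix c d assume c: "c \<in> h ` A" and d: "d \<in> h ` A" and e: "?phi c = ?phi d"
    have ca: "inv_into A h c \<in> A" "h (inv_into A h c) = c" using c by (auto intro: inv_into_into f_inv_into_f)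
    have da: "inv_into A h d \<in> A" "h (inv_into A h d) = d" using d by (auto intro: inv_into_into f_inv_into_f)
    show "c = d" using assms[OF ca(1) da(1)] e ca(2) da(2) by metis
  qed
  have "card (h' ` A) = card (?phi ` (h ` A))" using img by simp
  also have "\<dots> = card (h ` A)" using inj by (rule card_image)
  finally show ?thesis by simp
qed

lemma card_quot_collapse:
  assumes "f ` A = B" and "\<And>x y. x\<in>A \<Longrightarrow> y\<in>A \<Longrightarrow> (x,y) \<in> SR E \<longleftrightarrow> (f x, f y) \<in> SR E'"
  shows "card (A // SR E) = card (B // SR E')"
proof -
  have "card (A // SR E) = card ((\<lambda>x. SR E `` {x}) ` A)" by (simp add: quot_image)
  also have "\<dots> = card ((\<lambda>x. SR E' `` {f x}) ` A)"
  proof (rule card_image_kernel)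
    fix x y assume "x \<in> A" "y \<in> A"
    show "(SR E `` {x} = SR E `` {y}) = (SR E' `` {f x} = SR E' `` {f y})"
      using assms(2)[OF \<open>x\<in>A\<close> \<open>y\<in>A\<close>] by (simp only: SR_class_eq)
  qed
  also have "(\<lambda>x. SR E' `` {f x}) ` A = (\<lambda>y. SR E' `` {y}) ` B" using assms(1) by auto
  also have "card \<dots> = card (B // SR E')" by (simp add: quot_image)
  finally show ?thesis .
qed

lemma loops_collapse:
  assumes img: "mlv h ` closure_points n W = closure_points n W'"
  and fw: "\<And>u v. (u,v) \<in> smoothing_edges n W S \<Longrightarrow> (mlv h u, mlv h v) \<in> SR (smoothing_edges n W' S')"
  and bw: "\<And>u v. (u,v) \<in> smoothing_edges n W' S' \<Longrightarrow> (g u, g v) \<in> SR (smoothing_edges n W S)"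
  and gf: "\<And>x. x \<in> closure_points n W \<Longrightarrow> (x, g (mlv h x)) \<in> SR (smoothing_edges n W S)"
  shows "state_loops n W S = state_loops n W' S'"
  unfolding state_loops_def
proof (rule card_quot_collapse[OF img])
  fix x y assume "x \<in> closure_points n W" "y \<in> closure_points n W"
  show "((x, y) \<in> SR (smoothing_edges n W S)) = ((mlv h x, mlv h y) \<in> SR (smoothing_edges n W' S'))"
    by (rule collapse_rel[OF fw bw gf[OF \<open>x \<in> _\<close>] gf[OF \<open>y \<in> _\<close>]])
qed

lemma fw_eat:
  assumes "(u,v) \<in> eat n i p q b" and "eat n i (h p) (h q) b \<subseteq> SR E'"
  shows "(mlv h u, mlv h v) \<in> SR E'"
  using eat_map[OF assms(1), of h] assms(2) by blast

lemma eat_in_SE: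
  assumes "p < length W" "fst (W!p) = i" "q = Suc p mod length W" "b = (p \<in> S)"
  shows "eat n i p q b \<subseteq> SR (smoothing_edges n W S)"
  using eat_sub[OF assms(1), of n S] assms by auto

lemma eat_diag_F_SR: "eat n i p p False \<subseteq> SR E"
  using eat_diag_False by blast

lemma eat_diag_T_SR: "((p,i-1),(p,i)) \<in> SR E \<Longrightarrow> eat n i p p True \<subseteq> SR E"
  using eat_diag_True by blast

lemma eat_mem_vert: "k < n \<Longrightarrow> \<not> b \<or> (k \<noteq> i - 1 \<and> k \<noteq> i) \<Longrightarrow> ((p,k),(q,k)) \<in> eat n i p q b"
  by (auto simp: eat_def)
lemma eat_mem_cup: "((p,i-1),(p,i)) \<in> eat n i p q True"
  by (auto simp: eat_def)
lemma eat_mem_cap: "((q,i-1),(q,i)) \<in> eat n i p q True"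
  by (auto simp: eat_def)

lemma reroute_XF:
  assumes A: "eat n i p m b \<subseteq> SR E" and B: "eat n i' m q False \<subseteq> SR E" and i: "i - 1 < n" "i < n"
  shows "eat n i p q b \<subseteq> SR E"
proof
  fix x assume x: "x \<in> eat n i p q b"
  have vB: "\<And>k. k < n \<Longrightarrow> ((m,k),(q,k)) \<in> SR E" using B eat_mem_vert[of _ n False] by blast
  show "x \<in> SR E"
  proof (cases b)
    case False
    with x obtain k where k: "k < n" "x = ((p,k),(q,k))" by (auto simp: eat_def)
    have "((p,k),(m,k)) \<in> SR E" using A eat_mem_vert[of k n b] k False by blast
    with vB[OF k(1)] k show ?thesis by (auto intro: rtrancl_trans)
  next
    case True
    have A': "eat n i p m True \<subseteq> SR E" using A True by simp
    have capm: "((m,i-1),(m,i)) \<in> SR E" using A' eat_mem_cap by blast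
    have cap: "((q,i-1),(q,i)) \<in> SR E"
      using SR_trans[OF SR_sym[OF vB[OF i(1)]] SR_trans[OF capm vB[OF i(2)]]] .
    have cup: "((p,i-1),(p,i)) \<in> SR E" using A' eat_mem_cup by blast
    from x True consider (v) k where "k < n" "k \<noteq> i - 1" "k \<noteq> i" "x = ((p,k),(q,k))"
      | (a) "x = ((p,i-1),(p,i))" | (b) "x = ((q,i-1),(q,i))" by (auto simp: eat_def)
    then show ?thesis
    proof cases
      case (v k)
      have "((p,k),(m,k)) \<in> SR E" using A eat_mem_vert[of k n b] v True by blast
      with vB[OF v(1)] v show ?thesis by (auto intro: rtrancl_trans)
    qed (use cup cap in auto)
  qed
qed

lemma reroute_FT:
  assumes A: "eat n i' p m False \<subseteq> SR E" and B: "eat n i m q True \<subseteq> SR E" and i: "i - 1 < n" "i < n"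
  shows "eat n i p q True \<subseteq> SR E"
proof
  fix x assume x: "x \<in> eat n i p q True"
  have vA: "\<And>k. k < n \<Longrightarrow> ((p,k),(m,k)) \<in> SR E" using A eat_mem_vert[of _ n False] by blast
  have cupm: "((m,i-1),(m,i)) \<in> SR E" using B eat_mem_cup by blast
  have cup: "((p,i-1),(p,i)) \<in> SR E"
    using SR_trans[OF vA[OF i(1)] SR_trans[OF cupm SR_sym[OF vA[OF i(2)]]]] .
  have cap: "((q,i-1),(q,i)) \<in> SR E" using B eat_mem_cap by blast
  from x consider (v) k where "k < n" "k \<noteq> i - 1" "k \<noteq> i" "x = ((p,k),(q,k))"
    | (a) "x = ((p,i-1),(p,i))" | (b) "x = ((q,i-1),(q,i))" by (auto simp: eat_def)
  then show "x \<in> SR E"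
  proof cases
    case (v k)
    have "((m,k),(q,k)) \<in> SR E" using B eat_mem_vert[of k n True] v by blast
    with vA[OF v(1)] v show ?thesis by (auto intro: rtrancl_trans)
  qed (use cup cap in auto)
qed

lemma reroute_TT:
  assumes A: "eat n i p m True \<subseteq> SR E" and B: "eat n i m q True \<subseteq> SR E"
  shows "eat n i p q True \<subseteq> SR E"
proof
  fix x assume x: "x \<in> eat n i p q True"
  have cup: "((p,i-1),(p,i)) \<in> SR E" using A eat_mem_cup by blast
  have cap: "((q,i-1),(q,i)) \<in> SR E" using B eat_mem_cap by blast
  from x consider (v) k where "k < n" "k \<noteq> i - 1" "k \<noteq> i" "x = ((p,k),(q,k))"
    | (a) "x = ((p,i-1),(p,i))" | (b) "x = ((q,i-1),(q,i))" by (auto simp: eat_def)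
  then show "x \<in> SR E"
  proof cases
    case (v k)
    have "((p,k),(m,k)) \<in> SR E" using A eat_mem_vert[of k n True] v by blast
    moreover have "((m,k),(q,k)) \<in> SR E" using B eat_mem_vert[of k n True] v by blast
    ultimately show ?thesis using v by (auto intro: rtrancl_trans)
  qed (use cup cap in auto)
qed

lemma fw_intro:
  assumes uv: "(u,v) \<in> smoothing_edges n W S"
  and H: "\<And>p u v. p < length W \<Longrightarrow> (u,v) \<in> eat n (fst (W!p)) p (Suc p mod length W) (p \<in> S) \<Longrightarrow> (f u, f v) \<in> R"
  shows "(f u, f v) \<in> R"
proof -
  from uv obtain p where "p < length W" "(u,v) \<in> eat n (fst (W!p)) p (Suc p mod length W) (p \<in> S)"
    by (auto simp: smoothing_edges_eat)
  then show ?thesis by (rule H)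
qed

definition wfw :: "nat \<Rightarrow> braid_word \<Rightarrow> bool" where
  "wfw n w \<longleftrightarrow> (\<forall>x\<in>set w. 1 \<le> fst x \<and> fst x < n)"




lemma cp_eq: "closure_points n w = {..<max 1 (length w)} \<times> {..<n}"
  by (simp add: closure_points_def)

lemma loops_L1:
  assumes wf: "wfw n w" and NS: "length w \<notin> S"
  shows "state_loops n (w @ [l]) S = state_loops n w S"
proof -
  define N where "N = length w"
  define h where "h = (\<lambda>x::nat. if x = N then 0 else x)"
  let ?W = "w @ [l]"
  have lW: "length ?W = Suc N" by (simp add: N_def)
  have img: "mlv h ` closure_points n ?W = closure_points n w"
  proof (cases "N = 0")
    case True then show ?thesis by (auto simp: cp_eq N_def[symmetric] h_def mlv_def image_iff)
  next
    case False
    show ?thesis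
    proof (rule set_eqI, rule iffI)
      fix x assume "x \<in> mlv h ` closure_points n ?W"
      then show "x \<in> closure_points n w" using False by (auto simp: cp_eq N_def[symmetric] h_def mlv_def)
    next
      fix x assume "x \<in> closure_points n w"
      then have "x \<in> closure_points n ?W" "mlv h x = x" using False
        by (auto simp: cp_eq N_def[symmetric] h_def mlv_def)
      then show "x \<in> mlv h ` closure_points n ?W" by (metis image_eqI)
    qed
  qed
  show ?thesis
  proof (rule loops_collapse[OF img, where g = id])
    fix u v assume "(u,v) \<in> smoothing_edges n ?W S"
    then show "(mlv h u, mlv h v) \<in> SR (smoothing_edges n w S)"
    proof (rule fw_intro)
      fix p u v assume p: "p < length ?W" and uv: "(u,v) \<in> eat n (fst (?W!p)) p (Suc p mod length ?W) (p \<in> S)"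
      show "(mlv h u, mlv h v) \<in> SR (smoothing_edges n w S)"
      proof (rule fw_eat[OF uv])
        show "eat n (fst (?W!p)) (h p) (h (Suc p mod length ?W)) (p \<in> S) \<subseteq> SR (smoothing_edges n w S)"
        proof (cases "p < N")
          case True
          have "eat n (fst (w!p)) p (Suc p mod length w) (p \<in> S) \<subseteq> SR (smoothing_edges n w S)"
            by (rule eat_in_SE) (use True in \<open>auto simp: N_def\<close>)
          moreover have "h (Suc p mod length ?W) = Suc p mod length w"
            using True by (auto simp: lW h_def N_def)
          moreover have "h p = p" using True by (simp add: h_def)
          moreover have "?W!p = w!p" using True by (simp add: nth_append N_def)
          ultimately show ?thesis by simp
        next
          case False
          with p lW have pN: "p = N" by simp
          then have "p \<notin> S" using NS by (simp add: N_def)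
          then show ?thesis using pN by (simp add: lW h_def eat_diag_F_SR N_def[symmetric])
        qed
      qed
    qed
  next
    fix u v assume "(u,v) \<in> smoothing_edges n w S"
    then show "(id u, id v) \<in> SR (smoothing_edges n ?W S)"
    proof (rule fw_intro)
      fix p u v assume p: "p < length w" and uv: "(u,v) \<in> eat n (fst (w!p)) p (Suc p mod length w) (p \<in> S)"
      have Wp: "?W!p = w!p" using p by (simp add: nth_append)
      have sub: "eat n (fst (w!p)) p (Suc p mod length w) (p \<in> S) \<subseteq> SR (smoothing_edges n ?W S)"
      proof (cases "Suc p < N")
        case True
        show ?thesis by (rule eat_in_SE) (use True p Wp in \<open>auto simp: N_def\<close>)
      next
        case False
        with p have sp: "Suc p = N" by (simp add: N_def)
        have i: "fst (w!p) - 1 < n" "fst (w!p) < n" using wf p nth_mem[OF p] unfolding wfw_def by fastforce+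
        have A: "eat n (fst (w!p)) p N (p \<in> S) \<subseteq> SR (smoothing_edges n ?W S)"
          by (rule eat_in_SE) (use sp p Wp lW in auto)
        have B: "eat n (fst (?W!N)) N 0 False \<subseteq> SR (smoothing_edges n ?W S)"
          by (rule eat_in_SE) (use NS lW in \<open>auto simp: N_def\<close>)
        have "eat n (fst (w!p)) p 0 (p \<in> S) \<subseteq> SR (smoothing_edges n ?W S)"
          by (rule reroute_XF[OF A B i])
        then show ?thesis using sp by (simp add: N_def)
      qed
      show "(id u, id v) \<in> SR (smoothing_edges n ?W S)" using sub uv by auto
    qed
  next
    fix x assume x: "x \<in> closure_points n ?W"
    show "(x, id (mlv h x)) \<in> SR (smoothing_edges n ?W S)"
    proof (cases "fst x = N")
      case True
      have B: "eat n (fst (?W!N)) N 0 False \<subseteq> SR (smoothing_edges n ?W S)"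
        by (rule eat_in_SE) (use NS lW in \<open>auto simp: N_def\<close>)
      have "snd x < n" using x by (auto simp: cp_eq)
      then have "((N, snd x), (0, snd x)) \<in> eat n (fst (?W!N)) N 0 False" by (auto simp: eat_def)
      then show ?thesis using B True by (auto simp: mlv_def h_def)
    next
      case False then show ?thesis by (simp add: mlv_def h_def)
    qed
  qed
qed

lemma wfw_nth: "wfw n w \<Longrightarrow> p < length w \<Longrightarrow> fst (w!p) - 1 < n \<and> fst (w!p) < n"
  unfolding wfw_def using nth_mem by fastforce

lemma loops_L4:
  assumes wf: "wfw n (w@[a,b])" and S: "S \<subseteq> {..<length w}"
  shows "state_loops n (w @ [a,b]) (insert (Suc (length w)) S) = state_loops n (w @ [b]) (insert (length w) S)"
proof -
  define N where "N = length w"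
  define h where "h = (\<lambda>x::nat. if x = Suc N then N else x)"
  let ?W = "w @ [a,b]" and ?W' = "w @ [b]" and ?S = "insert (Suc N) S" and ?S' = "insert N S"
  have lW: "length ?W = Suc (Suc N)" "length ?W' = Suc N" by (simp_all add: N_def)
  have SN: "\<And>p. p \<in> S \<Longrightarrow> p < N" using S by (auto simp: N_def)
  have img: "mlv h ` closure_points n ?W = closure_points n ?W'"
  proof (rule set_eqI, rule iffI)
    fix x assume "x \<in> mlv h ` closure_points n ?W"
    then show "x \<in> closure_points n ?W'" by (auto simp: cp_eq N_def[symmetric] h_def mlv_def)
  next
    fix x assume "x \<in> closure_points n ?W'"
    then have "x \<in> closure_points n ?W" "mlv h x = x"
      by (auto simp: cp_eq N_def[symmetric] h_def mlv_def)
    then show "x \<in> mlv h ` closure_points n ?W" by (metis image_eqI)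
  qed
  have ib: "fst b - 1 < n" "fst b < n" using wfw_nth[OF wf, of "Suc N"] by (simp_all add: lW nth_append N_def)
  have A: "eat n (fst a) N (Suc N) False \<subseteq> SR (smoothing_edges n ?W ?S)"
    by (rule eat_in_SE) (use SN in \<open>auto simp: nth_append N_def\<close>)
  have B: "eat n (fst b) (Suc N) 0 True \<subseteq> SR (smoothing_edges n ?W ?S)"
    by (rule eat_in_SE) (auto simp: nth_append N_def)
  show ?thesis unfolding N_def[symmetric]
  proof (rule loops_collapse[OF img, where g = id])
    fix u v assume "(u,v) \<in> smoothing_edges n ?W ?S"
    then show "(mlv h u, mlv h v) \<in> SR (smoothing_edges n ?W' ?S')"
    proof (rule fw_intro)
      fix p u v assume p: "p < length ?W" and uv: "(u,v) \<in> eat n (fst (?W!p)) p (Suc p mod length ?W) (p \<in> ?S)"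
      show "(mlv h u, mlv h v) \<in> SR (smoothing_edges n ?W' ?S')"
      proof (rule fw_eat[OF uv])
        show "eat n (fst (?W!p)) (h p) (h (Suc p mod length ?W)) (p \<in> ?S) \<subseteq> SR (smoothing_edges n ?W' ?S')"
        proof -
          consider "p < N" | "p = N" | "p = Suc N" using p lW by linarith
          then show ?thesis
          proof cases
            case 1
            have "eat n (fst (?W'!p)) p (Suc p mod length ?W') (p \<in> ?S') \<subseteq> SR (smoothing_edges n ?W' ?S')"
              by (rule eat_in_SE) (use 1 in \<open>auto simp: N_def\<close>)
            moreover have "h (Suc p mod length ?W) = Suc p mod length ?W'"
              using 1 by (auto simp: lW h_def N_def[symmetric])
            moreover have "h p = p" using 1 by (simp add: h_def)
            moreover have "?W!p = ?W'!p" using 1 by (simp add: nth_append N_def)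
            moreover have "(p \<in> ?S) = (p \<in> ?S')" using 1 by auto
            ultimately show ?thesis by simp
          next
            case 2
            then have "p \<notin> ?S" using SN by auto
            then show ?thesis using 2 by (simp add: lW h_def eat_diag_F_SR N_def[symmetric])
          next
            case 3
            have "eat n (fst (?W'!N)) N (Suc N mod length ?W') (N \<in> ?S') \<subseteq> SR (smoothing_edges n ?W' ?S')"
              by (rule eat_in_SE) (auto simp: N_def)
            then show ?thesis using 3 by (simp add: lW h_def nth_append N_def)
          qed
        qed
      qed
    qed
  next
    fix u v assume "(u,v) \<in> smoothing_edges n ?W' ?S'"
    then show "(id u, id v) \<in> SR (smoothing_edges n ?W ?S)"
    proof (rule fw_intro)
      fix p u v assume p: "p < length ?W'" and uv: "(u,v) \<in> eat n (fst (?W'!p)) p (Suc p mod length ?W') (p \<in> ?S')"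
      have sub: "eat n (fst (?W'!p)) p (Suc p mod length ?W') (p \<in> ?S') \<subseteq> SR (smoothing_edges n ?W ?S)"
      proof (cases "p < N")
        case True
        show ?thesis by (rule eat_in_SE) (use True in \<open>auto simp: N_def nth_append\<close>)
      next
        case False
        with p lW have pN: "p = N" by simp
        have "eat n (fst b) N 0 True \<subseteq> SR (smoothing_edges n ?W ?S)"
          by (rule reroute_FT[OF A B ib])
        then show ?thesis using pN by (simp add: lW nth_append N_def)
      qed
      show "(id u, id v) \<in> SR (smoothing_edges n ?W ?S)" using sub uv by auto
    qed
  next
    fix x assume x: "x \<in> closure_points n ?W"
    show "(x, id (mlv h x)) \<in> SR (smoothing_edges n ?W ?S)"
    proof (cases "fst x = Suc N")
      case True
      have "snd x < n" using x by (auto simp: cp_eq)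
      then have "((N, snd x), (Suc N, snd x)) \<in> eat n (fst a) N (Suc N) False" by (auto simp: eat_def)
      then have "((N, snd x), (Suc N, snd x)) \<in> SR (smoothing_edges n ?W ?S)" using A by blast
      then have "((Suc N, snd x), (N, snd x)) \<in> SR (smoothing_edges n ?W ?S)" by (rule SR_sym)
      moreover have "x = (Suc N, snd x)" using True by (metis prod.collapse)
      ultimately show ?thesis using True by (simp add: mlv_def h_def)
    next
      case False then show ?thesis by (simp add: mlv_def h_def)
    qed
  qed
qed

lemma class_closed:
  assumes cl: "\<And>u v. (u,v) \<in> E \<Longrightarrow> (u \<in> C \<longleftrightarrow> v \<in> C)" and c: "c \<in> C"
    and con: "\<And>c'. c' \<in> C \<Longrightarrow> (c,c') \<in> SR E"
  shows "SR E `` {c} = C"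
proof
  show "SR E `` {c} \<subseteq> C"
  proof
    fix y assume "y \<in> SR E `` {c}"
    then have "(c,y) \<in> SR E" by simp
    then show "y \<in> C"
    proof (induct rule: rtrancl_induct)
      case base then show ?case by (rule c)
    next
      case (step y z)
      from step(2) show ?case
      proof
        assume "(y,z) \<in> E" then show ?thesis using cl step(3) by blast
      next
        assume "(y,z) \<in> E\<inverse>" then have "(z,y) \<in> E" by simp
        then show ?thesis using cl step(3) by blast
      qed
    qed
  qed
  show "C \<subseteq> SR E `` {c}" using con by auto
qed

lemma card_quot_remove_class:
  assumes fin: "finite A" and CA: "C \<subseteq> A" and c: "c \<in> C" and cls: "SR E `` {c} = C"
  shows "card (A // SR E) = Suc (card ((A - C) // SR E))"
proof -
  have cc: "\<And>x. x \<in> C \<Longrightarrow> SR E `` {x} = C"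
  proof -
    fix x assume "x \<in> C"
    then have "(c,x) \<in> SR E" using cls by auto
    then have "SR E `` {x} = SR E `` {c}" using SR_class_eq SR_sym by metis
    then show "SR E `` {x} = C" using cls by simp
  qed
  have AU: "A = C \<union> (A - C)" using CA by auto
  have "A // SR E = (\<lambda>x. SR E `` {x}) ` C \<union> (A - C) // SR E"
    unfolding quot_image using CA by blast
  also have "(\<lambda>x. SR E `` {x}) ` C = {C}" using cc c by auto
  finally have eq: "A // SR E = insert C ((A - C) // SR E)" by simp
  have notin: "C \<notin> (A - C) // SR E"
  proof
    assume "C \<in> (A - C) // SR E"
    then obtain x where x: "x \<in> A - C" "C = SR E `` {x}" by (auto simp: quot_image)
    then have "x \<in> C" by auto
    with x show False by simp
  qed
  have "finite ((A - C) // SR E)" using fin by (simp add: quot_image)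
  then show ?thesis using eq notin by simp
qed


lemma eat_levels: "(u,v) \<in> eat n i p q b \<Longrightarrow> fst u \<in> {p,q} \<and> fst v \<in> {p,q}"
  by (auto simp: eat_def split: if_splits)

lemma finite_cp: "finite (closure_points n w)"
  by (simp add: closure_points_def)

lemma loops_L2:
  assumes wf: "wfw n (w@[a,b])" and ab: "fst a = fst b" and S: "S \<subseteq> {..<length w}"
  shows "state_loops n (w @ [a,b]) (insert (length w) (insert (Suc (length w)) S))
       = Suc (state_loops n (w @ [a]) (insert (length w) S))"
proof -
  define N where "N = length w"
  define i where "i = fst a"
  define h where "h = (\<lambda>x::nat. if x = Suc N then 0 else x)"
  let ?W = "w @ [a,b]" and ?W' = "w @ [a]" and ?S = "insert N (insert (Suc N) S)" and ?S' = "insert N S"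
  let ?E = "smoothing_edges n ?W ?S" and ?E' = "smoothing_edges n ?W' ?S'"
  define A where "A = closure_points n ?W"
  define C where "C = {(Suc N, i - 1), (Suc N, i)}"
  have lW: "length ?W = Suc (Suc N)" "length ?W' = Suc N" by (simp_all add: N_def)
  have SN: "\<And>p. p \<in> S \<Longrightarrow> p < N" using S by (auto simp: N_def)
  have ii: "i - 1 < n" "i < n" using wfw_nth[OF wf, of N] by (simp_all add: lW nth_append N_def i_def)
  have AW: "eat n i N (Suc N) True \<subseteq> SR ?E"
    by (rule eat_in_SE) (use SN in \<open>auto simp: nth_append N_def i_def\<close>)
  have BW: "eat n i (Suc N) 0 True \<subseteq> SR ?E"
    by (rule eat_in_SE) (auto simp: nth_append N_def i_def ab)
  have AW': "eat n i N 0 True \<subseteq> SR ?E'"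
    by (rule eat_in_SE) (auto simp: nth_append N_def i_def)
  have cls: "SR ?E `` {(Suc N, i - 1)} = C"
  proof (rule class_closed)
    fix u v assume "(u,v) \<in> ?E"
    then obtain p where p: "p < length ?W" and uv: "(u,v) \<in> eat n (fst (?W!p)) p (Suc p mod length ?W) (p \<in> ?S)"
      by (auto simp: smoothing_edges_eat)
    consider "p < N" | "p = N" | "p = Suc N" using p lW by linarith
    then show "(u \<in> C) = (v \<in> C)"
    proof cases
      case 1
      then have "Suc p mod length ?W = Suc p" using lW by simp
      then have "fst u \<noteq> Suc N" "fst v \<noteq> Suc N" using eat_levels[OF uv] 1 by auto
      then show ?thesis by (auto simp: C_def)
    next
      case 2
      then have "(u,v) \<in> eat n i N (Suc N) True" using uv by (simp add: lW nth_append N_def i_def)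
      then show ?thesis by (auto simp: C_def eat_def)
    next
      case 3
      then have "(u,v) \<in> eat n i (Suc N) 0 True" using uv by (simp add: lW nth_append N_def i_def ab)
      then show ?thesis by (auto simp: C_def eat_def)
    qed
  next
    show "(Suc N, i - 1) \<in> C" by (simp add: C_def)
  next
    fix c' assume "c' \<in> C"
    moreover have "((Suc N, i - 1), (Suc N, i)) \<in> SR ?E" using BW eat_mem_cup by blast
    ultimately show "((Suc N, i - 1), c') \<in> SR ?E" by (auto simp: C_def)
  qed
  have CA: "C \<subseteq> A" using ii by (auto simp: A_def C_def cp_eq N_def)
  have step1: "card (A // SR ?E) = Suc (card ((A - C) // SR ?E))"
    by (rule card_quot_remove_class[OF _ CA _ cls]) (auto simp: A_def finite_cp C_def)
  have img: "mlv h ` (A - C) = closure_points n ?W'"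
  proof (rule set_eqI, rule iffI)
    fix x assume "x \<in> mlv h ` (A - C)"
    then show "x \<in> closure_points n ?W'" by (auto simp: A_def cp_eq N_def[symmetric] h_def mlv_def)
  next
    fix x assume "x \<in> closure_points n ?W'"
    then have "x \<in> A - C" "mlv h x = x"
      by (auto simp: A_def C_def cp_eq N_def[symmetric] h_def mlv_def)
    then show "x \<in> mlv h ` (A - C)" by (metis image_eqI)
  qed
  have gf: "\<And>x. x \<in> A - C \<Longrightarrow> (x, id (mlv h x)) \<in> SR ?E"
  proof -
    fix x assume x: "x \<in> A - C"
    show "(x, id (mlv h x)) \<in> SR ?E"
    proof (cases "fst x = Suc N")
      case True
      have "snd x < n" "snd x \<noteq> i - 1" "snd x \<noteq> i" using x True
        by (auto simp: A_def C_def cp_eq)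
      then have "((Suc N, snd x), (0, snd x)) \<in> eat n i (Suc N) 0 True" by (auto simp: eat_def)
      then have "((Suc N, snd x), (0, snd x)) \<in> SR ?E" using BW by blast
      moreover have "x = (Suc N, snd x)" using True by (metis prod.collapse)
      ultimately show ?thesis using True by (simp add: mlv_def h_def)
    next
      case False then show ?thesis by (simp add: mlv_def h_def)
    qed
  qed
  have fw: "\<And>u v. (u,v) \<in> ?E \<Longrightarrow> (mlv h u, mlv h v) \<in> SR ?E'"
  proof -
    fix u v assume "(u,v) \<in> ?E"
    then show "(mlv h u, mlv h v) \<in> SR ?E'"
    proof (rule fw_intro)
      fix p u v assume p: "p < length ?W" and uv: "(u,v) \<in> eat n (fst (?W!p)) p (Suc p mod length ?W) (p \<in> ?S)"
      show "(mlv h u, mlv h v) \<in> SR ?E'"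
      proof (rule fw_eat[OF uv])
        show "eat n (fst (?W!p)) (h p) (h (Suc p mod length ?W)) (p \<in> ?S) \<subseteq> SR ?E'"
        proof -
          consider "p < N" | "p = N" | "p = Suc N" using p lW by linarith
          then show ?thesis
          proof cases
            case 1
            have "eat n (fst (?W'!p)) p (Suc p mod length ?W') (p \<in> ?S') \<subseteq> SR ?E'"
              by (rule eat_in_SE) (use 1 in \<open>auto simp: N_def\<close>)
            moreover have "h (Suc p mod length ?W) = Suc p mod length ?W'"
              using 1 by (auto simp: lW h_def N_def[symmetric])
            moreover have "h p = p" using 1 by (simp add: h_def)
            moreover have "?W!p = ?W'!p" using 1 by (simp add: nth_append N_def)
            moreover have "(p \<in> ?S) = (p \<in> ?S')" using 1 by auto
            ultimately show ?thesis by simp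
          next
            case 2
            then show ?thesis using AW' by (simp add: lW h_def nth_append N_def i_def)
          next
            case 3
            have "((0, i - 1), (0, i)) \<in> SR ?E'" using AW' eat_mem_cap by blast
            then have "eat n i 0 0 True \<subseteq> SR ?E'" by (rule eat_diag_T_SR)
            then show ?thesis using 3 by (simp add: lW h_def nth_append N_def i_def ab)
          qed
        qed
      qed
    qed
  qed
  have bw: "\<And>u v. (u,v) \<in> ?E' \<Longrightarrow> (id u, id v) \<in> SR ?E"
  proof -
    fix u v assume "(u,v) \<in> ?E'"
    then show "(id u, id v) \<in> SR ?E"
    proof (rule fw_intro)
      fix p u v assume p: "p < length ?W'" and uv: "(u,v) \<in> eat n (fst (?W'!p)) p (Suc p mod length ?W') (p \<in> ?S')"
      have sub: "eat n (fst (?W'!p)) p (Suc p mod length ?W') (p \<in> ?S') \<subseteq> SR ?E"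
      proof (cases "p < N")
        case True
        show ?thesis by (rule eat_in_SE) (use True in \<open>auto simp: N_def nth_append\<close>)
      next
        case False
        with p lW have pN: "p = N" by simp
        have "eat n i N 0 True \<subseteq> SR ?E" by (rule reroute_TT[OF AW BW])
        then show ?thesis using pN by (simp add: lW nth_append N_def i_def)
      qed
      show "(id u, id v) \<in> SR ?E" using sub uv by auto
    qed
  qed
  have step2: "card ((A - C) // SR ?E) = card (closure_points n ?W' // SR ?E')"
  proof (rule card_quot_collapse[OF img])
    fix x y assume "x \<in> A - C" "y \<in> A - C"
    show "((x, y) \<in> SR ?E) = ((mlv h x, mlv h y) \<in> SR ?E')"
      by (rule collapse_rel[OF fw bw gf[OF \<open>x \<in> _\<close>] gf[OF \<open>y \<in> _\<close>]])
  qed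
  show ?thesis unfolding N_def[symmetric] state_loops_def
    using step1 step2 by (simp add: A_def)
qed




definition rh :: "nat \<Rightarrow> nat \<Rightarrow> nat" where "rh N x = (if x = 0 then N else x - 1)"
definition rh' :: "nat \<Rightarrow> nat \<Rightarrow> nat" where "rh' N x = (if x = N then 0 else Suc x)"

lemma rh_lt: "x < Suc N \<Longrightarrow> rh N x < Suc N" by (auto simp: rh_def)
lemma rh'_lt: "x < Suc N \<Longrightarrow> rh' N x < Suc N" by (auto simp: rh'_def)
lemma rh'_rh: "x < Suc N \<Longrightarrow> rh' N (rh N x) = x" by (auto simp: rh_def rh'_def)
lemma rh_rh': "x < Suc N \<Longrightarrow> rh N (rh' N x) = x" by (auto simp: rh_def rh'_def)
lemma Suc_mod_lt: "p < Suc N \<Longrightarrow> Suc p mod Suc N = (if p = N then 0 else Suc p)" by auto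
lemma rh_succ: "p < Suc N \<Longrightarrow> rh N (Suc p mod Suc N) = Suc (rh N p) mod Suc N"
  by (auto simp: rh_def Suc_mod_lt)
lemma rh'_succ: "p < Suc N \<Longrightarrow> rh' N (Suc p mod Suc N) = Suc (rh' N p) mod Suc N"
  by (auto simp: rh'_def Suc_mod_lt)
lemma rh_nth: "p < Suc (length w) \<Longrightarrow> (w @ [a]) ! (rh (length w) p) = (a # w) ! p"
  by (auto simp: rh_def nth_append nth_Cons')
lemma rh'_nth: "p < Suc (length w) \<Longrightarrow> (a # w) ! (rh' (length w) p) = (w @ [a]) ! p"
  by (auto simp: rh'_def nth_append)
lemma inj_rh: "inj_on (rh N) {..<Suc N}"
  by (rule inj_on_inverseI[where g = "rh' N"]) (simp add: rh'_rh)
lemma rh_image: "rh N ` {..<Suc N} = {..<Suc N}"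
proof
  show "rh N ` {..<Suc N} \<subseteq> {..<Suc N}" using rh_lt by auto
  show "{..<Suc N} \<subseteq> rh N ` {..<Suc N}"
  proof
    fix x assume "x \<in> {..<Suc N}"
    then show "x \<in> rh N ` {..<Suc N}" using rh_rh'[of x N] rh'_lt[of x N] by (metis image_eqI lessThan_iff)
  qed
qed

lemma loops_rot:
  assumes S: "S \<subseteq> {..<Suc (length w)}"
  shows "state_loops n (a # w) S = state_loops n (w @ [a]) (rh (length w) ` S)"
proof -
  define N where "N = length w"
  let ?W = "a # w" and ?W' = "w @ [a]" and ?S' = "rh N ` S"
  have lW: "length ?W = Suc N" "length ?W' = Suc N" by (simp_all add: N_def)
  have memS: "\<And>p. p < Suc N \<Longrightarrow> (rh N p \<in> ?S') = (p \<in> S)"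
    using inj_rh[of N] S unfolding N_def by (auto simp: inj_on_def)
  have memS': "\<And>p. p < Suc N \<Longrightarrow> (p \<in> ?S') = (rh' N p \<in> S)"
    using memS[of "rh' N _"] rh_rh' rh'_lt by metis
  have img: "mlv (rh N) ` closure_points n ?W = closure_points n ?W'"
  proof (rule set_eqI, rule iffI)
    fix x assume "x \<in> mlv (rh N) ` closure_points n ?W"
    then show "x \<in> closure_points n ?W'" using rh_lt by (auto simp: cp_eq lW mlv_def N_def)
  next
    fix x assume x: "x \<in> closure_points n ?W'"
    then have "(rh' N (fst x), snd x) \<in> closure_points n ?W" "mlv (rh N) (rh' N (fst x), snd x) = x"
      using rh'_lt rh_rh' by (auto simp: cp_eq lW mlv_def N_def)
    then show "x \<in> mlv (rh N) ` closure_points n ?W" by (metis image_eqI)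
  qed
  show ?thesis unfolding N_def[symmetric]
  proof (rule loops_collapse[OF img, where g = "mlv (rh' N)"])
    fix u v assume "(u,v) \<in> smoothing_edges n ?W S"
    then show "(mlv (rh N) u, mlv (rh N) v) \<in> SR (smoothing_edges n ?W' ?S')"
    proof (rule fw_intro)
      fix p u v assume p: "p < length ?W" and uv: "(u,v) \<in> eat n (fst (?W!p)) p (Suc p mod length ?W) (p \<in> S)"
      show "(mlv (rh N) u, mlv (rh N) v) \<in> SR (smoothing_edges n ?W' ?S')"
      proof (rule fw_eat[OF uv])
        have pl: "p < Suc N" using p lW by simp
        have "eat n (fst (?W'!(rh N p))) (rh N p) (Suc (rh N p) mod length ?W') (rh N p \<in> ?S') \<subseteq> SR (smoothing_edges n ?W' ?S')"
          by (rule eat_in_SE) (use rh_lt[OF pl] lW in auto)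
        then show "eat n (fst (?W!p)) (rh N p) (rh N (Suc p mod length ?W)) (p \<in> S) \<subseteq> SR (smoothing_edges n ?W' ?S')"
          using rh_nth[of p w a] rh_succ[OF pl] memS[OF pl] pl by (simp add: lW N_def)
      qed
    qed
  next
    fix u v assume "(u,v) \<in> smoothing_edges n ?W' ?S'"
    then show "(mlv (rh' N) u, mlv (rh' N) v) \<in> SR (smoothing_edges n ?W S)"
    proof (rule fw_intro)
      fix p u v assume p: "p < length ?W'" and uv: "(u,v) \<in> eat n (fst (?W'!p)) p (Suc p mod length ?W') (p \<in> ?S')"
      show "(mlv (rh' N) u, mlv (rh' N) v) \<in> SR (smoothing_edges n ?W S)"
      proof (rule fw_eat[OF uv])
        have pl: "p < Suc N" using p lW by simp
        have "eat n (fst (?W!(rh' N p))) (rh' N p) (Suc (rh' N p) mod length ?W) (rh' N p \<in> S) \<subseteq> SR (smoothing_edges n ?W S)"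
          by (rule eat_in_SE) (use rh'_lt[OF pl] lW in auto)
        then show "eat n (fst (?W'!p)) (rh' N p) (rh' N (Suc p mod length ?W')) (p \<in> ?S') \<subseteq> SR (smoothing_edges n ?W S)"
          using rh'_nth[of p w a] rh'_succ[OF pl] memS'[OF pl] pl by (simp add: lW N_def)
      qed
    qed
  next
    fix x assume "x \<in> closure_points n ?W"
    then have "fst x < Suc N" by (auto simp: cp_eq lW N_def)
    then have "mlv (rh' N) (mlv (rh N) x) = x" by (simp add: mlv_def rh'_rh)
    then show "(x, mlv (rh' N) (mlv (rh N) x)) \<in> SR (smoothing_edges n ?W S)" by simp
  qed
qed




definition om :: complex where "om = Complex (-1/2) (sqrt 3 / 2)"

lemma om_sq: "om * om + om + 1 = 0"
  by (simp add: om_def complex_eq_iff field_simps)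

lemma om_nz: "om \<noteq> 0"
  using om_sq by auto

lemma om_cube: "om ^ 3 = 1"
proof -
  have "om ^ 3 - 1 = (om - 1) * (om * om + om + 1)" by (simp add: algebra_simps power3_eq_cube)
  then show ?thesis using om_sq by simp
qed

abbreviation mpi :: "int poly \<Rightarrow> complex poly" where "mpi \<equiv> map_poly of_int"

lemma mpi_add: "mpi (p + q) = mpi p + mpi q"
  by (rule poly_eqI) (simp add: coeff_map_poly)

lemma mpi_neg: "mpi (- p) = - mpi p"
  by (rule poly_eqI) (simp add: coeff_map_poly)

lemma mpi_mult: "mpi (p * q) = mpi p * mpi q"
  by (rule poly_eqI) (simp add: coeff_map_poly coeff_mult)

lemma mpi_monom: "mpi (monom c n) = monom (of_int c) n"
  by (simp add: map_poly_monom)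

definition RR :: "int fls \<Rightarrow> complex \<Rightarrow> bool" where
  "RR f c \<longleftrightarrow> (\<exists>N::nat. \<exists>p::int poly. f = fls_shift (int N) (fps_to_fls (fps_of_poly p))
      \<and> c = poly (mpi p) om * inverse om ^ N)"

lemma RR_mult: assumes "RR f a" "RR g b" shows "RR (f * g) (a * b)"
proof -
  obtain N p where f: "f = fls_shift (int N) (fps_to_fls (fps_of_poly p))" "a = poly (mpi p) om * inverse om ^ N"
    using assms(1) by (auto simp: RR_def)
  obtain M q where g: "g = fls_shift (int M) (fps_to_fls (fps_of_poly q))" "b = poly (mpi q) om * inverse om ^ M"
    using assms(2) by (auto simp: RR_def)
  have "f * g = fls_shift (int (N + M)) (fps_to_fls (fps_of_poly (p * q)))"
    by (simp add: f g fls_times_both_shifted_simp fls_times_fps_to_fls fps_of_poly_mult)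
  moreover have "a * b = poly (mpi (p * q)) om * inverse om ^ (N + M)"
    by (simp add: f g mpi_mult power_add)
  ultimately show ?thesis unfolding RR_def by blast
qed

lemma monom_fls: "fps_to_fls (fps_of_poly (monom (1::int) M)) = fls_X ^ M"
  unfolding fps_of_poly_monom' fps_to_fls_power fps_X_to_fls by (rule refl)

lemma shift_poly: "fls_shift (- int M) (fps_to_fls (fps_of_poly (p :: int poly))) = fps_to_fls (fps_of_poly (monom 1 M * p))"
  by (simp add: fps_of_poly_mult fls_times_fps_to_fls monom_fls fls_X_power_times_conv_shift)

lemma RR_add: assumes "RR f a" "RR g b" shows "RR (f + g) (a + b)"
proof -
  obtain N p where f: "f = fls_shift (int N) (fps_to_fls (fps_of_poly p))" "a = poly (mpi p) om * inverse om ^ N"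
    using assms(1) by (auto simp: RR_def)
  obtain M q where g: "g = fls_shift (int M) (fps_to_fls (fps_of_poly q))" "b = poly (mpi q) om * inverse om ^ M"
    using assms(2) by (auto simp: RR_def)
  have e1: "f = fls_shift (int (N + M)) (fps_to_fls (fps_of_poly (monom 1 M * p)))"
    by (simp add: f shift_poly[symmetric])
  have e2: "g = fls_shift (int (N + M)) (fps_to_fls (fps_of_poly (monom 1 N * q)))"
    by (simp add: g shift_poly[symmetric])
  have "f + g = fls_shift (int (N + M)) (fps_to_fls (fps_of_poly (monom 1 M * p + monom 1 N * q)))"
    by (simp add: e1 e2 fps_of_poly_add del: of_nat_add)
  moreover have "a + b = poly (mpi (monom 1 M * p + monom 1 N * q)) om * inverse om ^ (N + M)"
    using om_nz by (simp add: f g mpi_mult mpi_add mpi_monom poly_monom power_add field_simps)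
  ultimately show ?thesis unfolding RR_def by blast
qed

lemma RR_neg: assumes "RR f a" shows "RR (- f) (- a)"
proof -
  obtain N p where f: "f = fls_shift (int N) (fps_to_fls (fps_of_poly p))" "a = poly (mpi p) om * inverse om ^ N"
    using assms(1) by (auto simp: RR_def)
  have "- f = fls_shift (int N) (fps_to_fls (fps_of_poly (- p)))" by (simp add: f fps_of_poly_uminus)
  moreover have "- a = poly (mpi (- p)) om * inverse om ^ N" by (simp add: f mpi_neg)
  ultimately show ?thesis unfolding RR_def by blast
qed

lemma RR_one: "RR 1 1"
  unfolding RR_def by (rule exI[of _ 0], rule exI[of _ 1]) simp

lemma RR_XP: "RR (fls_X_intpow z) (om powi z)"
proof (cases "z \<ge> 0")
  case True
  have "(fls_X_intpow z :: int fls) = fls_shift (int 0) (fps_to_fls (fps_of_poly (monom 1 (nat z))))"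
    using True by (simp add: monom_fls fls_X_power_conv_shift_1)
  moreover have "om powi z = poly (mpi (monom 1 (nat z))) om * inverse om ^ 0"
    using True by (simp add: power_int_def mpi_monom poly_monom)
  ultimately show ?thesis unfolding RR_def by blast
next
  case False
  have "(fls_X_intpow z :: int fls) = fls_shift (int (nat (-z))) (fps_to_fls (fps_of_poly 1))"
    using False by simp
  moreover have "om powi z = poly (mpi 1) om * inverse om ^ (nat (-z))"
    using False by (simp add: power_int_def)
  ultimately show ?thesis unfolding RR_def by blast
qed

lemma RR_sum: "finite A \<Longrightarrow> (\<And>x. x \<in> A \<Longrightarrow> RR (f x) (c x)) \<Longrightarrow> RR (\<Sum>x\<in>A. f x) (\<Sum>x\<in>A. c x)"
proof (induction A rule: finite_induct)
  case empty
  have "RR 0 0" unfolding RR_def by (rule exI[of _ 0], rule exI[of _ 0]) simp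
  then show ?case by simp
next
  case (insert x F) then show ?case by (simp add: RR_add)
qed

lemma RR_prod: "finite A \<Longrightarrow> (\<And>x. x \<in> A \<Longrightarrow> RR (f x) (c x)) \<Longrightarrow> RR (\<Prod>x\<in>A. f x) (\<Prod>x\<in>A. c x)"
proof (induction A rule: finite_induct)
  case empty then show ?case by (simp add: RR_one)
next
  case (insert x F) then show ?case by (simp add: RR_mult)
qed

lemma RR_pow: "RR f c \<Longrightarrow> RR (f ^ m) (c ^ m)"
  by (induction m) (simp_all add: RR_one RR_mult)

lemma RR_nz: assumes "RR f c" "c \<noteq> 0" shows "f \<noteq> 0"
proof
  assume f0: "f = 0"
  obtain N p where f: "f = fls_shift (int N) (fps_to_fls (fps_of_poly p))" "c = poly (mpi p) om * inverse om ^ N"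
    using assms(1) by (auto simp: RR_def)
  from f0 f(1) have "p = 0" by (simp add: fls_shift_eq0_iff fps_of_poly_eq_iff[of p 0, simplified])
  with f(2) assms(2) show False by simp
qed

lemma RR_D: "RR (- (fls_X + fls_X_inv)) 1"
proof -
  have "RR (- (fls_X_intpow 1 + fls_X_intpow (-1))) (- (om powi 1 + om powi (-1)))"
    by (intro RR_neg RR_add RR_XP)
  moreover have "- (om powi 1 + om powi (-1)) = 1"
    using om_sq om_nz by (simp add: power_int_minus field_simps) (metis add.commute add_eq_0_iff2 mult_1 distrib_right)
  ultimately show ?thesis by (simp add: fls_X_conv_shift_1 fls_X_inv_conv_shift_1)
qed




definition XP :: "int \<Rightarrow> int fls" where "XP z = fls_X_intpow z"
lemma XP_add: "XP a * XP b = XP (a + b)"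
  by (simp add: XP_def fls_X_intpow_times_fls_X_intpow)
lemma XP_0: "XP 0 = 1" by (simp add: XP_def)

definition DD :: "int fls" where "DD = - (fls_X + fls_X_inv)"
lemma DD_XP: "DD = - (XP 1 + XP (-1))"
  by (simp add: DD_def XP_def fls_X_conv_shift_1 fls_X_inv_conv_shift_1)

definition wtX :: "braid_word \<Rightarrow> nat set \<Rightarrow> int fls" where
  "wtX w S = (\<Prod>p<length w. XP (if p \<in> S then 2 * snd (w!p) else snd (w!p)))"

lemma jones_alt: "jones n w = (-1) ^ length w * (\<Sum>S\<in>Pow {..<length w}. wtX w S * DD ^ (state_loops n w S - 1))"
  by (simp add: jones_def wtX_def XP_def DD_def)

definition Je :: "nat \<Rightarrow> braid_word \<Rightarrow> nat \<Rightarrow> int fls" where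
  "Je n w i = (-1) ^ length w * (\<Sum>S\<in>Pow {..<length w}. wtX w S * DD ^ (state_loops n (w @ [(i,1)]) (insert (length w) S) - 1))"

lemma loops_fst:
  assumes "map fst w = map fst w'"
  shows "state_loops n w S = state_loops n w' S"
proof -
  have l: "length w = length w'" using assms by (rule map_eq_imp_length_eq)
  have f: "\<And>p. p < length w \<Longrightarrow> fst (w!p) = fst (w'!p)" using assms l by (metis nth_map)
  have "smoothing_edges n w S = smoothing_edges n w' S"
    unfolding smoothing_edges_eat using l f by (intro SUP_cong) auto
  moreover have "closure_points n w = closure_points n w'" by (simp add: closure_points_def l)
  ultimately show ?thesis by (simp add: state_loops_def)
qed

lemma loops_pos: assumes "1 \<le> n" shows "1 \<le> state_loops n w S"
proof -
  have "(0,0) \<in> closure_points n w" using assms by (simp add: closure_points_def)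
  then have "closure_points n w // SR (smoothing_edges n w S) \<noteq> {}" by (auto simp: quot_image)
  moreover have "finite (closure_points n w // SR (smoothing_edges n w S))"
    by (simp add: quot_image finite_cp)
  ultimately show ?thesis unfolding state_loops_def
    by (simp add: Suc_le_eq card_gt_0_iff)
qed

lemma sum_Pow_Suc:
  "(\<Sum>S\<in>Pow {..<Suc N}. F S) = (\<Sum>S\<in>Pow {..<N}. F S) + (\<Sum>S\<in>Pow {..<N}. F (insert N S))"
proof -
  have P: "Pow {..<Suc N} = Pow {..<N} \<union> insert N ` Pow {..<N}"
    by (simp add: lessThan_Suc Pow_insert)
  have d: "Pow {..<N} \<inter> insert N ` Pow {..<N} = {}" by auto
  have i: "inj_on (insert N) (Pow {..<N})"
    by (rule inj_onI) (auto simp: insert_ident)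
  have "(\<Sum>S\<in>Pow {..<Suc N}. F S) = (\<Sum>S\<in>Pow {..<N}. F S) + (\<Sum>S\<in>insert N ` Pow {..<N}. F S)"
    unfolding P by (rule sum.union_disjoint) (use d in auto)
  also have "(\<Sum>S\<in>insert N ` Pow {..<N}. F S) = (\<Sum>S\<in>Pow {..<N}. F (insert N S))"
    by (rule sum.reindex[OF i, unfolded comp_def])
  finally show ?thesis .
qed

lemma wtX_snoc_out: "S \<subseteq> {..<length w} \<Longrightarrow> wtX (w @ [l]) S = wtX w S * XP (snd l)"
proof -
  assume S: "S \<subseteq> {..<length w}"
  have "wtX (w @ [l]) S = (\<Prod>p<length w. XP (if p \<in> S then 2 * snd ((w@[l])!p) else snd ((w@[l])!p)))
      * XP (if length w \<in> S then 2 * snd l else snd l)"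
    by (simp add: wtX_def)
  also have "(\<Prod>p<length w. XP (if p \<in> S then 2 * snd ((w@[l])!p) else snd ((w@[l])!p))) = wtX w S"
    unfolding wtX_def by (rule prod.cong) (auto simp: nth_append)
  finally show ?thesis using S by auto
qed

lemma wtX_snoc_in: "S \<subseteq> {..<length w} \<Longrightarrow> wtX (w @ [l]) (insert (length w) S) = wtX w S * XP (2 * snd l)"
proof -
  assume S: "S \<subseteq> {..<length w}"
  have "wtX (w @ [l]) (insert (length w) S) = (\<Prod>p<length w. XP (if p \<in> insert (length w) S then 2 * snd ((w@[l])!p) else snd ((w@[l])!p)))
      * XP (2 * snd l)"
    by (simp add: wtX_def)
  also have "(\<Prod>p<length w. XP (if p \<in> insert (length w) S then 2 * snd ((w@[l])!p) else snd ((w@[l])!p))) = wtX w S"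
    unfolding wtX_def by (rule prod.cong) (auto simp: nth_append)
  finally show ?thesis .
qed

lemma jones_snoc:
  assumes wf: "wfw n w"
  shows "jones n (w @ [(i,e)]) = - (XP e * jones n w + XP (2*e) * Je n w i)"
proof -
  define N where "N = length w"
  let ?l = "(i,e)"
  have s1: "(\<Sum>S\<in>Pow {..<N}. wtX (w@[?l]) S * DD ^ (state_loops n (w@[?l]) S - 1))
      = XP e * (\<Sum>S\<in>Pow {..<N}. wtX w S * DD ^ (state_loops n w S - 1))"
    unfolding sum_distrib_left
  proof (rule sum.cong)
    fix S assume "S \<in> Pow {..<N}"
    then have S: "S \<subseteq> {..<length w}" and NS: "length w \<notin> S" by (auto simp: N_def)
    show "wtX (w@[?l]) S * DD ^ (state_loops n (w@[?l]) S - 1) = XP e * (wtX w S * DD ^ (state_loops n w S - 1))"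
      using wtX_snoc_out[OF S, of ?l] loops_L1[OF wf NS, of ?l] by simp
  qed simp
  have s2: "(\<Sum>S\<in>Pow {..<N}. wtX (w@[?l]) (insert N S) * DD ^ (state_loops n (w@[?l]) (insert N S) - 1))
      = XP (2*e) * (\<Sum>S\<in>Pow {..<N}. wtX w S * DD ^ (state_loops n (w @ [(i,1)]) (insert N S) - 1))"
    unfolding sum_distrib_left
  proof (rule sum.cong)
    fix S assume "S \<in> Pow {..<N}"
    then have S: "S \<subseteq> {..<length w}" by (auto simp: N_def)
    have "state_loops n (w@[?l]) (insert N S) = state_loops n (w @ [(i,1)]) (insert N S)"
      by (rule loops_fst) simp
    then show "wtX (w@[?l]) (insert N S) * DD ^ (state_loops n (w@[?l]) (insert N S) - 1)
        = XP (2*e) * (wtX w S * DD ^ (state_loops n (w @ [(i,1)]) (insert N S) - 1))"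
      using wtX_snoc_in[OF S, of ?l] by (simp add: N_def)
  qed simp
  have "jones n (w @ [?l]) = (-1) ^ Suc N * ((\<Sum>S\<in>Pow {..<N}. wtX (w@[?l]) S * DD ^ (state_loops n (w@[?l]) S - 1))
      + (\<Sum>S\<in>Pow {..<N}. wtX (w@[?l]) (insert N S) * DD ^ (state_loops n (w@[?l]) (insert N S) - 1)))"
    unfolding jones_alt by (simp add: N_def sum_Pow_Suc)
  also have "\<dots> = - (XP e * jones n w + XP (2*e) * Je n w i)"
    unfolding s1 s2 jones_alt Je_def N_def[symmetric] by (simp add: algebra_simps)
  finally show ?thesis .
qed

lemma key_e: assumes "e = 1 \<or> e = -1" shows "- (XP e + XP (2*e) * DD) = XP (3*e)"
proof -
  have a: "XP (2*e) * XP 1 = XP (2*e+1)" "XP (2*e) * XP (-1) = XP (2*e-1)" by (simp_all add: XP_add)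
  have "- (XP e + XP (2*e) * DD) = XP (2*e+1) + XP (2*e-1) - XP e"
    unfolding DD_XP distrib_left a[symmetric] by (simp add: algebra_simps)
  then show ?thesis using assms by auto
qed

lemma wfw_append [simp]: "wfw n (x @ y) \<longleftrightarrow> wfw n x \<and> wfw n y"
  by (auto simp: wfw_def)
lemma wfw_Cons [simp]: "wfw n (a # y) \<longleftrightarrow> 1 \<le> fst a \<and> fst a < n \<and> wfw n y"
  by (auto simp: wfw_def)
lemma wfw_Nil [simp]: "wfw n []" by (simp add: wfw_def)
lemma wfw_replicate: "1 \<le> fst a \<Longrightarrow> fst a < n \<Longrightarrow> wfw n (replicate m a)"
  by (auto simp: wfw_def)

lemma Je_snoc:
  assumes wf: "wfw n w" and i: "1 \<le> i" "i < n" and e: "e = 1 \<or> e = -1"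
  shows "Je n (w @ [(i,e)]) i = XP (3*e) * Je n w i"
proof -
  define N where "N = length w"
  let ?l = "(i,e)" and ?c = "(i,1::int)"
  have wf3: "wfw n (w @ [?l, ?c])" using wf i by simp
  have n1: "1 \<le> n" using i by simp
  define B where "B = (\<Sum>S\<in>Pow {..<N}. wtX w S * DD ^ (state_loops n (w @ [?c]) (insert N S) - 1))"
  have s1: "(\<Sum>S\<in>Pow {..<N}. wtX (w@[?l]) S * DD ^ (state_loops n (w @ [?l, ?c]) (insert (Suc N) S) - 1))
      = XP e * B"
    unfolding sum_distrib_left B_def
  proof (rule sum.cong)
    fix S assume "S \<in> Pow {..<N}"
    then have S: "S \<subseteq> {..<length w}" by (auto simp: N_def)
    show "wtX (w@[?l]) S * DD ^ (state_loops n (w @ [?l, ?c]) (insert (Suc N) S) - 1)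
       = XP e * (wtX w S * DD ^ (state_loops n (w @ [?c]) (insert N S) - 1))"
      using wtX_snoc_out[OF S, of ?l] loops_L4[OF wf3 S] by (simp add: N_def)
  qed simp
  have s2: "(\<Sum>S\<in>Pow {..<N}. wtX (w@[?l]) (insert N S) * DD ^ (state_loops n (w @ [?l, ?c]) (insert (Suc N) (insert N S)) - 1))
      = XP (2*e) * DD * B"
    unfolding sum_distrib_left B_def
  proof (rule sum.cong)
    fix S assume "S \<in> Pow {..<N}"
    then have S: "S \<subseteq> {..<length w}" by (auto simp: N_def)
    have "state_loops n (w @ [?l, ?c]) (insert (Suc N) (insert N S))
        = state_loops n (w @ [?l, ?c]) (insert N (insert (Suc N) S))" by (simp add: insert_commute)
    also have "\<dots> = Suc (state_loops n (w @ [?l]) (insert N S))"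
      using loops_L2[OF wf3 _ S] by (simp add: N_def)
    also have "state_loops n (w @ [?l]) (insert N S) = state_loops n (w @ [?c]) (insert N S)"
      by (rule loops_fst) simp
    finally have L: "state_loops n (w @ [?l, ?c]) (insert (Suc N) (insert N S)) = Suc (state_loops n (w @ [?c]) (insert N S))" .
    have pos: "1 \<le> state_loops n (w @ [?c]) (insert N S)" by (rule loops_pos[OF n1])
    have "DD ^ (Suc (state_loops n (w @ [?c]) (insert N S)) - 1) = DD * DD ^ (state_loops n (w @ [?c]) (insert N S) - 1)"
      using pos by (cases "state_loops n (w @ [?c]) (insert N S)") auto
    then show "wtX (w@[?l]) (insert N S) * DD ^ (state_loops n (w @ [?l, ?c]) (insert (Suc N) (insert N S)) - 1)
       = XP (2*e) * DD * (wtX w S * DD ^ (state_loops n (w @ [?c]) (insert N S) - 1))"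
      using wtX_snoc_in[OF S, of ?l] L by (simp add: N_def algebra_simps)
  qed simp
  have "Je n (w @ [?l]) i = (-1) ^ Suc N * ((\<Sum>S\<in>Pow {..<N}. wtX (w@[?l]) S * DD ^ (state_loops n (w @ [?l, ?c]) (insert (Suc N) S) - 1))
      + (\<Sum>S\<in>Pow {..<N}. wtX (w@[?l]) (insert N S) * DD ^ (state_loops n (w @ [?l, ?c]) (insert (Suc N) (insert N S)) - 1)))"
    unfolding Je_def by (simp add: N_def sum_Pow_Suc)
  also have "\<dots> = (- (XP e + XP (2*e) * DD)) * ((-1) ^ N * B)"
    unfolding s1 s2 by (simp add: algebra_simps)
  also have "\<dots> = XP (3*e) * Je n w i"
    unfolding key_e[OF e] by (simp add: Je_def B_def N_def)
  finally show ?thesis .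
qed

lemma rep_snoc: "c @ replicate (Suc m) x = (c @ replicate m x) @ [x]"
  by (simp add: replicate_append_same)

lemma BJ:
  assumes wf: "wfw n c" and i: "1 \<le> i" "i < n" and e: "e = 1 \<or> e = -1"
  shows "Je n (c @ replicate m (i,e)) i = XP (3 * e * int m) * Je n c i"
proof (induction m)
  case 0 then show ?case by (simp add: XP_0)
next
  case (Suc m)
  have wfm: "wfw n (c @ replicate m (i,e))" using wf i by (simp add: wfw_replicate)
  have "Je n (c @ replicate (Suc m) (i,e)) i = XP (3*e) * Je n (c @ replicate m (i,e)) i"
    unfolding rep_snoc by (rule Je_snoc[OF wfm i e])
  also have "\<dots> = XP (3 * e * int (Suc m)) * Je n c i"
    unfolding Suc.IH by (simp only: mult.assoc[symmetric] XP_add) (simp add: algebra_simps)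
  finally show ?case .
qed

lemma BV:
  assumes wf: "wfw n c" and i: "1 \<le> i" "i < n" and e: "e = 1 \<or> e = -1"
  shows "jones n (c @ replicate (Suc m) (i,e)) = - (XP e * jones n (c @ replicate m (i,e)) + XP (2*e + 3*e*int m) * Je n c i)"
proof -
  have wfm: "wfw n (c @ replicate m (i,e))" using wf i by (simp add: wfw_replicate)
  show ?thesis unfolding rep_snoc jones_snoc[OF wfm] BJ[OF wf i e]
    by (simp only: mult.assoc[symmetric] XP_add)
qed




lemma rh_mem: "S \<subseteq> {..<Suc N} \<Longrightarrow> p < Suc N \<Longrightarrow> (rh N p \<in> rh N ` S) = (p \<in> S)"
  using inj_rh[of N] by (auto simp: inj_on_def)

lemma wtX_rot:
  assumes S: "S \<subseteq> {..<Suc (length w)}"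
  shows "wtX (w @ [a]) (rh (length w) ` S) = wtX (a # w) S"
proof -
  define N where "N = length w"
  have "wtX (w @ [a]) (rh N ` S) = (\<Prod>p'\<in>rh N ` {..<Suc N}. XP (if p' \<in> rh N ` S then 2 * snd ((w@[a])!p') else snd ((w@[a])!p')))"
    unfolding wtX_def rh_image by (simp add: N_def)
  also have "\<dots> = (\<Prod>p\<in>{..<Suc N}. XP (if rh N p \<in> rh N ` S then 2 * snd ((w@[a])!(rh N p)) else snd ((w@[a])!(rh N p))))"
    by (rule prod.reindex[OF inj_rh, unfolded comp_def])
  also have "\<dots> = wtX (a # w) S"
    unfolding wtX_def
  proof (rule prod.cong)
    fix p assume p: "p \<in> {..<length (a # w)}"
    then have pl: "p < Suc N" by (simp add: N_def)
    show "XP (if rh N p \<in> rh N ` S then 2 * snd ((w@[a])!(rh N p)) else snd ((w@[a])!(rh N p)))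
       = XP (if p \<in> S then 2 * snd ((a#w)!p) else snd ((a#w)!p))"
      using rh_mem[OF S[folded N_def] pl] rh_nth[of p w a] pl by (simp add: N_def)
  qed (simp add: N_def)
  finally show ?thesis by (simp add: N_def)
qed

lemma jones_rot: "jones n (a # w) = jones n (w @ [a])"
proof -
  define N where "N = length w"
  let ?G = "\<lambda>S'. wtX (w @ [a]) S' * DD ^ (state_loops n (w @ [a]) S' - 1)"
  have i: "inj_on (image (rh N)) (Pow {..<Suc N})" by (rule inj_on_image_Pow[OF inj_rh])
  have im: "image (rh N) ` Pow {..<Suc N} = Pow {..<Suc N}" by (rule image_Pow_surj[OF rh_image])
  have "(\<Sum>S'\<in>Pow {..<Suc N}. ?G S') = (\<Sum>S\<in>Pow {..<Suc N}. ?G (rh N ` S))"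
    by (subst im[symmetric]) (rule sum.reindex[OF i, unfolded comp_def])
  also have "\<dots> = (\<Sum>S\<in>Pow {..<Suc N}. wtX (a # w) S * DD ^ (state_loops n (a # w) S - 1))"
  proof (rule sum.cong)
    fix S assume "S \<in> Pow {..<Suc N}"
    then have S: "S \<subseteq> {..<Suc (length w)}" by (simp add: N_def)
    show "?G (rh N ` S) = wtX (a # w) S * DD ^ (state_loops n (a # w) S - 1)"
      using wtX_rot[OF S] loops_rot[OF S, of n a] by (simp add: N_def)
  qed simp
  finally show ?thesis unfolding jones_alt by (simp add: N_def)
qed

lemma jones_comm: "jones n (x @ y) = jones n (y @ x)"
proof (induction x arbitrary: y)
  case Nil then show ?case by simp
next
  case (Cons a x)
  have "jones n ((a # x) @ y) = jones n ((x @ y) @ [a])" by (simp add: jones_rot)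
  also have "\<dots> = jones n (x @ (y @ [a]))" by simp
  also have "\<dots> = jones n ((y @ [a]) @ x)" by (rule Cons.IH)
  finally show ?case by simp
qed

lemma sum_Pow_prod_if:
  fixes f g :: "'a \<Rightarrow> 'b::comm_semiring_1"
  assumes "finite A"
  shows "(\<Sum>S\<in>Pow A. \<Prod>p\<in>A. if p \<in> S then f p else g p) = (\<Prod>p\<in>A. f p + g p)"
proof -
  have "(\<Prod>p\<in>A. f p + g p) = (\<Sum>X\<in>Pow A. prod f X * prod g (A - X))"
    by (rule prod_add[OF assms])
  also have "\<dots> = (\<Sum>S\<in>Pow A. \<Prod>p\<in>A. if p \<in> S then f p else g p)"
  proof (rule sum.cong)
    fix S assume "S \<in> Pow A"
    then have "A \<inter> {x. x \<in> S} = S" "A \<inter> - {x. x \<in> S} = A - S" by auto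
    then show "prod f S * prod g (A - S) = (\<Prod>p\<in>A. if p \<in> S then f p else g p)"
      using prod.If_cases[OF assms, of "\<lambda>x. x \<in> S" f g] by simp
  qed simp
  finally show ?thesis by simp
qed

lemma om_pair: "e = 1 \<or> e = -1 \<Longrightarrow> om powi (2*e) + om powi e = -1"
proof -
  assume e: "e = 1 \<or> e = -1"
  have a: "om * om = - om - 1"
  proof -
    show ?thesis by (simp add: om_def complex_eq_iff field_simps)
  qed
  have inv: "inverse om = - om - 1"
  proof -
    have "om * (- om - 1) = 1" by (simp add: om_def complex_eq_iff field_simps)
    then show ?thesis using om_nz by (simp add: inverse_unique)
  qed
  show ?thesis using e
  proof
    assume "e = 1" then show ?thesis by (simp add: om_def complex_eq_iff field_simps power2_eq_square)
  next
    assume "e = -1"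
    then have "om powi (2*e) + om powi e = inverse om * inverse om + inverse om"
      by (simp add: power_int_minus power2_eq_square)
    also have "\<dots> = -1" unfolding inv by (simp add: om_def complex_eq_iff field_simps)
    finally show ?thesis .
  qed
qed

lemma jones_nz:
  assumes n: "1 \<le> n" and sg: "\<forall>x\<in>set w. snd x = 1 \<or> snd x = -1"
  shows "jones n w \<noteq> 0"
proof -
  define N where "N = length w"
  let ?t = "\<lambda>S p. om powi (if p \<in> S then 2 * snd (w!p) else snd (w!p))"
  have R: "RR (jones n w) ((-1) ^ N * (\<Sum>S\<in>Pow {..<N}. (\<Prod>p<N. ?t S p) * 1 ^ (state_loops n w S - 1)))"
    unfolding jones_alt N_def[symmetric]
  proof (rule RR_mult)
    show "RR ((- 1) ^ N) ((- 1) ^ N)" by (intro RR_pow RR_neg RR_one)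
    have R2: "\<And>S. RR (wtX w S) (\<Prod>p<N. ?t S p)"
      unfolding wtX_def N_def[symmetric] by (rule RR_prod) (simp_all add: XP_def RR_XP)
    have R3: "\<And>m. RR (DD ^ m) (1 ^ m)" unfolding DD_def by (intro RR_pow RR_D)
    show "RR (\<Sum>S\<in>Pow {..<N}. wtX w S * DD ^ (state_loops n w S - 1))
         (\<Sum>S\<in>Pow {..<N}. (\<Prod>p<N. ?t S p) * 1 ^ (state_loops n w S - 1))"
    proof (rule RR_sum)
      fix S show "RR (wtX w S * DD ^ (state_loops n w S - 1)) ((\<Prod>p<N. ?t S p) * 1 ^ (state_loops n w S - 1))"
        by (rule RR_mult[OF R2 R3])
    qed simp
  qed
  have "(\<Sum>S\<in>Pow {..<N}. (\<Prod>p<N. ?t S p) * 1 ^ (state_loops n w S - 1))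
      = (\<Sum>S\<in>Pow {..<N}. \<Prod>p<N. if p \<in> S then om powi (2 * snd (w!p)) else om powi (snd (w!p)))"
    by (auto intro!: sum.cong prod.cong)
  also have "\<dots> = (\<Prod>p<N. om powi (2 * snd (w!p)) + om powi (snd (w!p)))"
    by (rule sum_Pow_prod_if) simp
  also have "\<dots> = (\<Prod>p<N. -1)"
  proof (rule prod.cong)
    fix p assume "p \<in> {..<N}"
    then have "snd (w!p) = 1 \<or> snd (w!p) = -1" using sg by (simp add: N_def)
    then show "om powi (2 * snd (w!p)) + om powi (snd (w!p)) = -1" by (rule om_pair)
  qed simp
  finally have "(-1) ^ N * (\<Sum>S\<in>Pow {..<N}. (\<Prod>p<N. ?t S p) * 1 ^ (state_loops n w S - 1)) = (1::complex)"
    by (simp add: power_mult_distrib[symmetric])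
  with R have "RR (jones n w) 1" by simp
  then show ?thesis by (rule RR_nz) simp
qed

lemma Vrec1:
  assumes wf: "wfw n c" and i: "1 \<le> i" "i < n"
    and VV: "\<And>e. V e = jones n (c @ replicate (nat \<bar>e\<bar>) (i, sgn e))"
  shows "V (e + 1) = - (XP 1 * V e + XP (3 * e + 2) * Je n c i)"
proof (cases "e \<ge> 0")
  case True
  define m where "m = nat e"
  have e: "e = int m" using True by (simp add: m_def)
  have ne: "nat \<bar>e + 1\<bar> = Suc m" "sgn (e + 1) = 1" using True by (simp_all add: m_def)
  have V1: "V (e + 1) = jones n (c @ replicate (Suc m) (i, 1))"
    using VV[of "e+1"] unfolding ne .
  have V0: "V e = jones n (c @ replicate m (i, 1))"
  proof (cases "m = 0")
    case True then have "e = 0" using e by simp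
    then show ?thesis using VV[of e] True by simp
  next
    case False then have "sgn e = 1" "nat \<bar>e\<bar> = m" using e by auto
    then show ?thesis using VV[of e] by simp
  qed
  have BV1: "jones n (c @ replicate (Suc m) (i, 1)) = - (XP 1 * jones n (c @ replicate m (i, 1)) + XP (2 * 1 + 3 * 1 * int m) * Je n c i)"
    by (rule BV[OF wf i]) simp
  show ?thesis unfolding V1 V0 BV1 by (simp add: e algebra_simps)
next
  case False
  define m where "m = nat (- e - 1)"
  have e: "e = - int m - 1" using False by (simp add: m_def)
  have ne: "nat \<bar>e\<bar> = Suc m" "sgn e = -1" using False by (simp_all add: m_def)
  have V0: "V e = jones n (c @ replicate (Suc m) (i, -1))"
    using VV[of e] unfolding ne .
  have V1: "V (e + 1) = jones n (c @ replicate m (i, -1))"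
  proof (cases "m = 0")
    case True then have "e + 1 = 0" using e by simp
    then show ?thesis using VV[of "e+1"] True by simp
  next
    case False then have "sgn (e + 1) = -1" "nat \<bar>e + 1\<bar> = m" using e by auto
    then show ?thesis using VV[of "e+1"] by simp
  qed
  define Q where "Q = Je n c i"
  define V' where "V' = jones n (c @ replicate m (i, -1))"
  have B: "V e = - (XP (-1) * V' + XP (-2 - 3 * int m) * Q)"
    unfolding V0 V'_def Q_def using BV[OF wf i, of "-1" m] by (simp add: algebra_simps)
  have "XP 1 * V e = - (XP 1 * XP (-1) * V' + XP 1 * XP (-2 - 3 * int m) * Q)"
    unfolding B by (simp add: algebra_simps)
  also have "\<dots> = - (V' + XP (-1 - 3 * int m) * Q)"
    by (simp add: XP_add XP_0)
  finally have "XP 1 * V e = - (V' + XP (-1 - 3 * int m) * Q)" .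
  moreover have "XP (3 * e + 2) = XP (-1 - 3 * int m)" by (simp add: e)
  ultimately show ?thesis unfolding V1 V'_def[symmetric] Q_def[symmetric] by simp
qed

lemma Vrec2:
  assumes R: "\<And>e. V (e + 1) = - (XP 1 * V e + XP (3 * e + 2) * Q)"
  shows "V (e + 2) = (XP 3 - XP 1) * V (e + 1) + XP 4 * V e"
proof -
  have a: "V (e + 2) = - (XP 1 * V (e + 1) + XP (3 * e + 5) * Q)"
    using R[of "e+1"] by (simp add: algebra_simps)
  have b: "XP (3 * e + 2) * Q = - V (e + 1) - XP 1 * V e"
  proof -
    have "XP (3 * e + 2) * Q = - (- (XP 1 * V e + XP (3 * e + 2) * Q)) - XP 1 * V e" by simp
    also have "\<dots> = - V (e + 1) - XP 1 * V e" using R[of e] by simp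
    finally show ?thesis .
  qed
  have "XP (3 * e + 5) * Q = XP 3 * (XP (3 * e + 2) * Q)"
    by (simp add: mult.assoc[symmetric] XP_add add.commute)
  also have "\<dots> = - (XP 3 * V (e + 1)) - XP 3 * XP 1 * V e" unfolding b by (simp add: algebra_simps)
  also have "XP 3 * XP 1 = XP 4" by (simp add: XP_add)
  finally have c: "XP (3 * e + 5) * Q = - (XP 3 * V (e + 1)) - XP 4 * V e" .
  show ?thesis unfolding a c by (simp add: algebra_simps)
qed




definition LB :: "int fls \<Rightarrow> int \<Rightarrow> bool" where "LB f a \<longleftrightarrow> (\<forall>d<a. fls_nth f d = 0)"

lemma LB_sub: "LB f (fls_subdegree f)" by (simp add: LB_def)
lemma LB_mono: "LB f a \<Longrightarrow> b \<le> a \<Longrightarrow> LB f b" by (simp add: LB_def)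
lemma LB_add: "LB f a \<Longrightarrow> LB g a \<Longrightarrow> LB (f + g) a" by (simp add: LB_def)
lemma LB_diff: "LB f a \<Longrightarrow> LB g a \<Longrightarrow> LB (f - g) a" by (simp add: LB_def)
lemma LB_XP: "LB f a \<Longrightarrow> LB (XP z * f) (a + z)"
  by (simp add: LB_def XP_def fls_X_intpow_times_conv_shift)
lemma LB_ord: "f \<noteq> 0 \<Longrightarrow> LB f a \<Longrightarrow> a \<le> fls_subdegree f"
  by (rule fls_subdegree_geI) (simp_all add: LB_def)

lemma LB_step:
  assumes rec: "V (e + 2) = XP 3 * V (e + 1) - XP 1 * V (e + 1) + XP 4 * V e"
    and a: "LB (V e) (b - 1)" and c: "LB (V (e + 1)) b"
  shows "LB (V (e + 2)) (b + 1)"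
proof -
  have "LB (XP 3 * V (e + 1)) (b + 3)" by (rule LB_XP[OF c])
  then have 1: "LB (XP 3 * V (e + 1)) (b + 1)" by (rule LB_mono) simp
  have 2: "LB (XP 1 * V (e + 1)) (b + 1)" by (rule LB_XP[OF c])
  have "LB (XP 4 * V e) (b - 1 + 4)" by (rule LB_XP[OF a])
  then have 3: "LB (XP 4 * V e) (b + 1)" by (rule LB_mono) simp
  show ?thesis unfolding rec by (intro LB_add LB_diff 1 2 3)
qed

lemma LB_rec:
  assumes rec: "\<And>e. V (e + 2) = XP 3 * V (e + 1) - XP 1 * V (e + 1) + XP 4 * V e"
    and l0: "LB (V e) \<mu>" and l1: "LB (V (e + 1)) \<mu>"
  shows "LB (V (e + int t + 1)) (\<mu> + int t) \<and> LB (V (e + int t + 2)) (\<mu> + int t + 1)"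
proof (induction t)
  case 0
  have "LB (V e) (\<mu> - 1)" using l0 by (rule LB_mono) simp
  then have "LB (V (e + 2)) (\<mu> + 1)" by (rule LB_step[OF rec _ l1])
  then show ?case using l1 by simp
next
  case (Suc t)
  let ?e = "e + int t + 1"
  have A: "LB (V ?e) (\<mu> + int t + 1 - 1)" using Suc.IH by simp
  have B: "LB (V (?e + 1)) (\<mu> + int t + 1)" using Suc.IH by (simp add: add.assoc)
  have "LB (V (?e + 2)) (\<mu> + int t + 1 + 1)" by (rule LB_step[OF rec A B])
  then have C: "LB (V (e + int (Suc t) + 2)) (\<mu> + int (Suc t) + 1)" by (simp add: algebra_simps)
  have D: "LB (V (e + int (Suc t) + 1)) (\<mu> + int (Suc t))" using Suc.IH by (simp add: algebra_simps)
  show ?case using C D by simp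
qed

lemma pw_set:
  "x \<in> set (concat (map (\<lambda>h. replicate (nat \<bar>a h\<bar>) (i h, sgn (a h))) L))
   \<Longrightarrow> \<exists>h\<in>set L. x = (i h, sgn (a h)) \<and> a h \<noteq> 0"
  by (auto split: if_splits)

theorem proposition3p5:
  fixes n k j :: nat and i :: "nat \<Rightarrow> nat" and a :: "nat \<Rightarrow> int"
    and V :: "int \<Rightarrow> int fls"
  assumes gens: "\<forall>h<k. 1 \<le> i h \<and> i h < n"
    and j: "j < k"
    and V_def: "\<forall>e. V e = jones n (power_word k i (a(j := e)))"
  shows "(\<forall>e::int.
           ord_fls (V (e + 2)) \<ge> 1 + min (ord_fls (V e)) (ord_fls (V (e + 1)))
         \<and> (\<forall>m::int. m \<ge> 2 \<longrightarrow>
              ord_fls (V (e + m)) \<ge> min (ord_fls (V e)) (ord_fls (V (e + 1))) + (m - 1)))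
         \<and> (\<exists>E. \<forall>e\<ge>E. \<forall>d<0. fls_nth (V e) d = 0)"
proof -
  define F where "F = (\<lambda>(a'::nat \<Rightarrow> int) h. replicate (nat \<bar>a' h\<bar>) (i h, sgn (a' h)))"
  define u where "u = concat (map (F a) [0..<j])"
  define v where "v = concat (map (F a) [Suc j..<k])"
  define c where "c = v @ u"
  define ij where "ij = i j"
  have ij: "1 \<le> ij" "ij < n" using gens j by (simp_all add: ij_def)
  have n1: "1 \<le> n" using ij by simp
  have upt: "[0..<k] = [0..<j] @ j # [Suc j..<k]"
    using j by (metis le_add1 less_imp_le_nat upt_add_eq_append upt_conv_Cons add_0 le_add_diff_inverse)
  have pw: "\<And>e. power_word k i (a(j := e)) = u @ replicate (nat \<bar>e\<bar>) (ij, sgn e) @ v"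
  proof -
    fix e
    have m1: "map (F (a(j := e))) [0..<j] = map (F a) [0..<j]" by (auto simp: F_def)
    have m2: "map (F (a(j := e))) [Suc j..<k] = map (F a) [Suc j..<k]" by (auto simp: F_def)
    have pwF: "power_word k i (a(j := e)) = concat (map (F (a(j := e))) [0..<k])"
      by (simp add: power_word_def F_def)
    have Fj: "F (a(j := e)) j = replicate (nat \<bar>e\<bar>) (ij, sgn e)" by (simp add: F_def ij_def)
    show "power_word k i (a(j := e)) = u @ replicate (nat \<bar>e\<bar>) (ij, sgn e) @ v"
      unfolding pwF upt by (simp only: map_append concat_append list.map concat.simps m1 m2 Fj u_def v_def append_assoc)
  qed
  have Vc: "\<And>e. V e = jones n (c @ replicate (nat \<bar>e\<bar>) (ij, sgn e))"
  proof -
    fix e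
    have "V e = jones n (u @ (replicate (nat \<bar>e\<bar>) (ij, sgn e) @ v))" using V_def pw by simp
    also have "\<dots> = jones n ((replicate (nat \<bar>e\<bar>) (ij, sgn e) @ v) @ u)" by (rule jones_comm)
    also have "\<dots> = jones n (replicate (nat \<bar>e\<bar>) (ij, sgn e) @ (v @ u))" by simp
    also have "\<dots> = jones n ((v @ u) @ replicate (nat \<bar>e\<bar>) (ij, sgn e))" by (rule jones_comm)
    finally show "V e = jones n (c @ replicate (nat \<bar>e\<bar>) (ij, sgn e))" by (simp add: c_def)
  qed
  have wfc: "wfw n c"
  proof -
    have "\<And>x. x \<in> set c \<Longrightarrow> 1 \<le> fst x \<and> fst x < n"
    proof -
      fix x assume "x \<in> set c"
      then have "x \<in> set (concat (map (F a) [0..<j])) \<or> x \<in> set (concat (map (F a) [Suc j..<k]))"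
        by (auto simp: c_def u_def v_def)
      then obtain L h where L: "L = [0..<j] \<or> L = [Suc j..<k]" and h: "h \<in> set L" "x = (i h, sgn (a h))"
      proof
        assume "x \<in> set (concat (map (F a) [0..<j]))"
        from pw_set[OF this[unfolded F_def]] obtain h where "h \<in> set [0..<j]" "x = (i h, sgn (a h))" by blast
        then show thesis using that by blast
      next
        assume "x \<in> set (concat (map (F a) [Suc j..<k]))"
        from pw_set[OF this[unfolded F_def]] obtain h where "h \<in> set [Suc j..<k]" "x = (i h, sgn (a h))" by blast
        then show thesis using that by blast
      qed
      then have "h < k" "fst x = i h" using j by auto
      then show "1 \<le> fst x \<and> fst x < n" using gens by simp
    qed
    then show ?thesis by (simp add: wfw_def)
  qed
  have nz: "\<And>e. V e \<noteq> 0"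
  proof -
    fix e
    have "\<forall>x\<in>set (power_word k i (a(j := e))). snd x = 1 \<or> snd x = -1"
      unfolding power_word_def by (auto dest!: pw_set simp: sgn_if)
    then show "V e \<noteq> 0" using V_def jones_nz[OF n1] by simp
  qed
  have rec1: "\<And>e. V (e + 1) = - (XP 1 * V e + XP (3 * e + 2) * Je n c ij)"
    by (rule Vrec1[OF wfc ij Vc])
  have rec: "\<And>e. V (e + 2) = XP 3 * V (e + 1) - XP 1 * V (e + 1) + XP 4 * V e"
    using Vrec2[OF rec1] by (simp add: algebra_simps)
  have main: "\<And>e m. m \<ge> 2 \<Longrightarrow>
      LB (V (e + m)) (min (ord_fls (V e)) (ord_fls (V (e + 1))) + (m - 1))"
  proof -
    fix e m :: int assume m: "m \<ge> 2"
    define \<mu> where "\<mu> = min (ord_fls (V e)) (ord_fls (V (e + 1)))"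
    have l0: "LB (V e) \<mu>" using LB_sub[of "V e"] by (rule LB_mono) (simp add: \<mu>_def)
    have l1: "LB (V (e + 1)) \<mu>" using LB_sub[of "V (e + 1)"] by (rule LB_mono) (simp add: \<mu>_def)
    have "LB (V (e + int (nat (m - 2)) + 2)) (\<mu> + int (nat (m - 2)) + 1)"
      using LB_rec[OF rec l0 l1, of "nat (m - 2)"] by simp
    moreover have "e + int (nat (m - 2)) + 2 = e + m" "\<mu> + int (nat (m - 2)) + 1 = \<mu> + (m - 1)" using m by simp_all
    ultimately have "LB (V (e + m)) (\<mu> + (m - 1))" by (simp add: add_diff_eq)
    then show "LB (V (e + m)) (min (ord_fls (V e)) (ord_fls (V (e + 1))) + (m - 1))"
      unfolding \<mu>_def .
  qed
  have partb: "\<And>e m. m \<ge> 2 \<Longrightarrow> ord_fls (V (e + m)) \<ge> min (ord_fls (V e)) (ord_fls (V (e + 1))) + (m - 1)"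
    by (rule LB_ord[OF nz main])
  have parta: "\<And>e. ord_fls (V (e + 2)) \<ge> 1 + min (ord_fls (V e)) (ord_fls (V (e + 1)))"
    using partb[of 2] by (simp add: add.commute)
  have partc: "\<exists>E. \<forall>e\<ge>E. \<forall>d<0. fls_nth (V e) d = 0"
  proof (intro exI allI impI)
    define \<mu>0 where "\<mu>0 = min (ord_fls (V 0)) (ord_fls (V (0 + 1)))"
    fix e d :: int assume e: "e \<ge> max 2 (1 - \<mu>0)" and d: "d < 0"
    have "LB (V (0 + e)) (\<mu>0 + (e - 1))" using main[of e 0] e by (simp add: \<mu>0_def)
    then show "fls_nth (V e) d = 0" using e d by (simp add: LB_def)
  qed
  show ?thesis using parta partb partc by blast
qed


end
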